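(* Let $(X,d)$ be a proper metric space, let $\sigma$ be a conical bicombing on $X$, and let $x,y\in X$. Then for each integer $n\ge1$ there exist unique points $\sigma_{xy}(n;i)$, $i=0,\dots,n$, such that $\sigma_{xy}(n;0)=x$, $\sigma_{xy}(n;n)=y$, and \[ \sigma_{xy}(n;i)=\sigma\big(\sigma_{xy}(n;i-1),\sigma_{xy}(n;i+1),\tfrac12\big) \] for all $1\le i\le n-1$. Moreover, the map $\sigma^{(n)}\colon X\times X\times[0,1]\to X$ given by \[ \sigma^{(n)}\big(x,y,(1-\lambda)\tfrac{i}{n}+\lambda\tfrac{i+1}{n}\big):=\sigma\big(\sigma_{xy}(n;i),\sigma_{xy}(n;i+1),\lambda\big) \] for all $x,y\in X$, $\lambda\in[0,1]$ and $0\le i\le n-1$, is a conical bicombing.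
   Context: A bicombing on $(X,d)$ is a map $\sigma\colon X\times X\times[0,1]\to X$ such that each $\sigma_{xy}:=\sigma(x,y,\cdot)$ is a geodesic from $x$ to $y$ ($\sigma_{xy}(0)=x$, $\sigma_{xy}(1)=y$, $d(\sigma_{xy}(s),\sigma_{xy}(t))=|s-t|d(x,y)$); it is conical if $d(\sigma_{xy}(t),\sigma_{x'y'}(t))\le(1-t)d(x,x')+t\,d(y,y')$ for all $x,y,x',y'\in X$, $t\in[0,1]$. A metric space is proper if closed bounded sets are compact. *)

theory Defs
  imports "HOL-Analysis.Analysis"
begin

definition proper_metric :: "'a::metric_space itself \<Rightarrow> bool" where
  "proper_metric _ \<longleftrightarrow> (\<forall>S::'a set. closed S \<and> bounded S \<longrightarrow> compact S)"

definition geodesic01 :: "(real \<Rightarrow> 'a::metric_space) \<Rightarrow> 'a \<Rightarrow> 'a \<Rightarrow> bool" where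
  "geodesic01 g x y \<longleftrightarrow> g 0 = x \<and> g 1 = y \<and>
     (\<forall>s\<in>{0..1}. \<forall>t\<in>{0..1}. dist (g s) (g t) = \<bar>s - t\<bar> * dist x y)"

definition bicombing :: "('a::metric_space \<Rightarrow> 'a \<Rightarrow> real \<Rightarrow> 'a) \<Rightarrow> bool" where
  "bicombing \<sigma> \<longleftrightarrow> (\<forall>x y. geodesic01 (\<sigma> x y) x y)"

definition conical_bicombing :: "('a::metric_space \<Rightarrow> 'a \<Rightarrow> real \<Rightarrow> 'a) \<Rightarrow> bool" where
  "conical_bicombing \<sigma> \<longleftrightarrow> bicombing \<sigma> \<and>
     (\<forall>x y x' y'. \<forall>t\<in>{0..1}.
        dist (\<sigma> x y t) (\<sigma> x' y' t) \<le> (1 - t) * dist x x' + t * dist y y')"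

definition midpoint_chain :: "('a \<Rightarrow> 'a \<Rightarrow> real \<Rightarrow> 'a) \<Rightarrow> nat \<Rightarrow> 'a \<Rightarrow> 'a \<Rightarrow> 'a list \<Rightarrow> bool" where
  "midpoint_chain \<sigma> n x y p \<longleftrightarrow> length p = n + 1 \<and> p ! 0 = x \<and> p ! n = y \<and>
     (\<forall>i. 1 \<le> i \<and> i \<le> n - 1 \<longrightarrow> p ! i = \<sigma> (p ! (i - 1)) (p ! (i + 1)) (1/2))"

end

theory Submission
  imports Defs
begin

lemma cb_geo:
  assumes "conical_bicombing \<sigma>"
  shows "\<sigma> x y 0 = x" "\<sigma> x y 1 = y"
    "s \<in> {0..1} \<Longrightarrow> t \<in> {0..1} \<Longrightarrow> dist (\<sigma> x y s) (\<sigma> x y t) = \<bar>s - t\<bar> * dist x y"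
  using assms unfolding conical_bicombing_def bicombing_def geodesic01_def by auto

lemma cb_con:
  assumes "conical_bicombing \<sigma>" "t \<in> {0..1}"
  shows "dist (\<sigma> x y t) (\<sigma> x' y' t) \<le> (1 - t) * dist x x' + t * dist y y'"
  using assms unfolding conical_bicombing_def by auto

lemma cb_same:
  assumes "conical_bicombing \<sigma>" "t \<in> {0..1}"
  shows "\<sigma> x x t = x"
proof -
  have "dist (\<sigma> x x t) (\<sigma> x x 0) = 0" using cb_geo(3)[OF assms(1) assms(2), of 0 x x] by simp
  then show ?thesis using cb_geo(1)[OF assms(1)] by simp
qed

lemma cb_mid:
  assumes "conical_bicombing \<sigma>"
  shows "dist a (\<sigma> a b (1/2)) = dist a b / 2" "dist (\<sigma> a b (1/2)) b = dist a b / 2"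
proof -
  show "dist a (\<sigma> a b (1/2)) = dist a b / 2"
    using cb_geo(3)[OF assms, of 0 "1/2" a b] cb_geo(1)[OF assms, of a b] by simp
  show "dist (\<sigma> a b (1/2)) b = dist a b / 2"
    using cb_geo(3)[OF assms, of "1/2" 1 a b] cb_geo(2)[OF assms, of a b] by simp
qed

lemma maxp:
  fixes u :: "nat \<Rightarrow> real"
  assumes "u 0 \<le> 0" "u n \<le> 0" "\<And>i. 0 < i \<Longrightarrow> i < n \<Longrightarrow> 2 * u i \<le> u (i - 1) + u (i + 1)"
    and "j \<le> n"
  shows "u j \<le> 0"
proof (rule ccontr)
  assume "\<not> u j \<le> 0"
  define m where "m = Max (u ` {0..n})"
  have fin: "finite (u ` {0..n})" by simp
  have um: "\<And>k. k \<le> n \<Longrightarrow> u k \<le> m" unfolding m_def using fin by (intro Max_ge) auto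
  have "m \<in> u ` {0..n}" unfolding m_def using fin by (intro Max_in) auto
  then obtain k0 where k0: "k0 \<le> n" "u k0 = m" by auto
  have mpos: "m > 0" using um[OF assms(4)] \<open>\<not> u j \<le> 0\<close> by simp
  define i where "i = (LEAST k. k \<le> n \<and> u k = m)"
  have i: "i \<le> n" "u i = m" unfolding i_def using LeastI[of "\<lambda>k. k \<le> n \<and> u k = m" k0] k0 by auto
  have imin: "\<And>k. k < i \<Longrightarrow> \<not> (k \<le> n \<and> u k = m)" unfolding i_def using not_less_Least by blast
  have "i \<noteq> 0" using i assms(1) mpos by (metis not_le)
  moreover have "i \<noteq> n" using i assms(2) mpos by auto
  ultimately have ii: "0 < i" "i < n" using i by auto
  have "u (i - 1) < m" using imin[of "i - 1"] um[of "i - 1"] ii by fastforce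
  moreover have "u (i + 1) \<le> m" using um ii by simp
  ultimately show False using assms(3)[OF ii] i by linarith
qed

lemma chain_int:
  assumes "midpoint_chain \<sigma> n x y p" "0 < i" "i < n"
  shows "p ! i = \<sigma> (p ! (i - 1)) (p ! (i + 1)) (1/2)"
  using assms unfolding midpoint_chain_def by auto

lemma chain_cmp:
  assumes cb: "conical_bicombing \<sigma>" and P: "midpoint_chain \<sigma> n x y p"
    and Q: "midpoint_chain \<sigma> n x' y' q" and n: "n \<ge> 1" and j: "j \<le> n"
  shows "dist (p ! j) (q ! j) \<le> (1 - real j / n) * dist x x' + (real j / n) * dist y y'"
proof -
  define h where "h k = (1 - real k / n) * dist x x' + (real k / n) * dist y y'" for k
  define u where "u k = dist (p ! k) (q ! k) - h k" for k
  have "u j \<le> 0"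
  proof (rule maxp[OF _ _ _ j])
    show "u 0 \<le> 0" using P Q unfolding u_def h_def midpoint_chain_def by simp
    show "u n \<le> 0" using P Q n unfolding u_def h_def midpoint_chain_def by simp
    fix k assume k: "0 < k" "k < n"
    have "dist (p ! k) (q ! k) \<le> (1 - 1/2) * dist (p ! (k - 1)) (q ! (k - 1)) + (1/2) * dist (p ! (k + 1)) (q ! (k + 1))"
      using chain_int[OF P k] chain_int[OF Q k] cb_con[OF cb, of "1/2"] by simp
    moreover have "real (k - 1) = real k - 1" using k by simp
    then have "h (k - 1) + h (k + 1) = 2 * h k"
      using n unfolding h_def by (simp add: field_simps)
    ultimately show "2 * u k \<le> u (k - 1) + u (k + 1)" unfolding u_def
      by argo
  qed
  then show ?thesis unfolding u_def h_def by simp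
qed

lemma chain_unique:
  assumes cb: "conical_bicombing \<sigma>" and P: "midpoint_chain \<sigma> n x y p"
    and Q: "midpoint_chain \<sigma> n x y q" and n: "n \<ge> 1"
  shows "p = q"
proof (rule nth_equalityI)
  show "length p = length q" using P Q unfolding midpoint_chain_def by simp
  fix i assume "i < length p"
  then have "i \<le> n" using P unfolding midpoint_chain_def by simp
  from chain_cmp[OF cb P Q n this] show "p ! i = q ! i" by simp
qed

lemma chain_len: "midpoint_chain \<sigma> n x y p \<Longrightarrow> length p = n + 1"
  and chain_0: "midpoint_chain \<sigma> n x y p \<Longrightarrow> p ! 0 = x"
  and chain_n: "midpoint_chain \<sigma> n x y p \<Longrightarrow> p ! n = y"
  unfolding midpoint_chain_def by auto

lemma chain_step:
  assumes cb: "conical_bicombing \<sigma>" and P: "midpoint_chain \<sigma> n x y p"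
  shows "i < n \<Longrightarrow> dist (p ! i) (p ! (i + 1)) = dist (p ! 0) (p ! 1)"
proof (induction i)
  case 0 then show ?case by simp
next
  case (Suc i)
  have k: "0 < Suc i" "Suc i < n" using Suc by auto
  have e: "p ! Suc i = \<sigma> (p ! i) (p ! (i + 2)) (1/2)" using chain_int[OF P k] by simp
  have "dist (p ! i) (p ! (i + 1)) = dist (p ! (Suc i)) (p ! (Suc i + 1))"
    using cb_mid[OF cb, of "p ! i" "p ! (i+2)"] e by (simp add: numeral_2_eq_2)
  then show ?case using Suc by simp
qed

lemma chain_upper:
  assumes cb: "conical_bicombing \<sigma>" and P: "midpoint_chain \<sigma> n x y p"
  shows "a \<le> b \<Longrightarrow> b \<le> n \<Longrightarrow> dist (p ! a) (p ! b) \<le> (real b - real a) * dist (p ! 0) (p ! 1)"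
proof (induction b)
  case 0 then show ?case by simp
next
  case (Suc b)
  show ?case
  proof (cases "a = Suc b")
    case True then show ?thesis by simp
  next
    case False
    then have ab: "a \<le> b" "b < n" using Suc by auto
    have "dist (p ! a) (p ! Suc b) \<le> dist (p ! a) (p ! b) + dist (p ! b) (p ! (b + 1))"
      using dist_triangle by simp
    also have "\<dots> \<le> (real b - real a) * dist (p ! 0) (p ! 1) + dist (p ! 0) (p ! 1)"
      using Suc.IH ab chain_step[OF cb P ab(2)] by simp
    finally show ?thesis by (simp add: algebra_simps)
  qed
qed

lemma chain_total:
  assumes cb: "conical_bicombing \<sigma>" and P: "midpoint_chain \<sigma> n x y p" and n: "n \<ge> 1"
  shows "dist x y = real n * dist (p ! 0) (p ! 1)"
proof -
  define \<delta> where "\<delta> = dist (p ! 0) (p ! 1)"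
  define f where "f i = dist x (p ! i)" for i
  have conv: "f (i + 2) - f (i + 1) \<ge> f (i + 1) - f i" if "i + 1 < n" for i
  proof -
    have k: "0 < i + 1" "i + 1 < n" using that by auto
    have "f (i + 1) = dist (\<sigma> x x (1/2)) (\<sigma> (p ! i) (p ! (i + 2)) (1/2))"
      unfolding f_def using chain_int[OF P k] cb_same[OF cb, of "1/2" x] by (simp add: numeral_2_eq_2)
    also have "\<dots> \<le> (1 - 1/2) * f i + (1/2) * f (i + 2)"
      unfolding f_def by (rule cb_con[OF cb]) simp
    finally show ?thesis by simp
  qed
  have d: "f (i + 1) - f i \<ge> \<delta>" if "i < n" for i
    using that
  proof (induction i)
    case 0 then show ?case using chain_0[OF P] unfolding f_def \<delta>_def by simp
  next
    case (Suc i)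
    then show ?case using conv[of i] by simp
  qed
  have lb: "i \<le> n \<Longrightarrow> f i \<ge> real i * \<delta>" for i
  proof (induction i)
    case 0 then show ?case unfolding f_def by simp
  next
    case (Suc i)
    then show ?case using d[of i] by (simp add: algebra_simps)
  qed
  have "dist x y \<ge> real n * \<delta>" using lb[of n] chain_n[OF P] unfolding f_def by simp
  moreover have "dist x y \<le> real n * \<delta>"
    using chain_upper[OF cb P, of 0 n] chain_0[OF P] chain_n[OF P] unfolding \<delta>_def by simp
  ultimately show ?thesis unfolding \<delta>_def by simp
qed

lemma geom_cauchy:
  fixes f :: "nat \<Rightarrow> 'a::metric_space"
  assumes c: "0 \<le> c" "c < 1" and d: "\<And>k. dist (f (Suc k)) (f k) \<le> K * c ^ k"
  shows "Cauchy f"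
proof -
  have K: "K \<ge> 0" using d[of 0] zero_le_dist[of "f (Suc 0)" "f 0"] by (simp del: zero_le_dist)
  have b: "dist (f m) (f (m + k)) \<le> K * c ^ m * (1 - c ^ k) / (1 - c)" for m k
  proof (induction k)
    case 0 then show ?case by simp
  next
    case (Suc k)
    have "dist (f m) (f (m + Suc k)) \<le> dist (f m) (f (m + k)) + dist (f (Suc (m + k))) (f (m + k))"
      using dist_triangle[of "f m" "f (m + Suc k)" "f (m + k)"] by (simp add: dist_commute)
    also have "\<dots> \<le> K * c ^ m * (1 - c ^ k) / (1 - c) + K * c ^ (m + k)"
      using Suc.IH d[of "m + k"] by simp
    also have "\<dots> = K * c ^ m * (1 - c ^ Suc k) / (1 - c)"
      using c by (simp add: field_simps power_add)
    finally show ?case .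
  qed
  have b2: "dist (f m) (f (m + k)) \<le> K * c ^ m / (1 - c)" for m k
  proof -
    have "K * c ^ m * (1 - c ^ k) \<le> K * c ^ m * 1"
      using K c by (intro mult_left_mono) (auto simp: zero_le_power)
    then have "K * c ^ m * (1 - c ^ k) / (1 - c) \<le> K * c ^ m / (1 - c)"
      using c by (intro divide_right_mono) auto
    then show ?thesis using b[of m k] by linarith
  qed
  have lim: "(\<lambda>m. K * c ^ m / (1 - c)) \<longlonglongrightarrow> 0"
    using c by (intro tendsto_divide_zero tendsto_mult_right_zero LIMSEQ_power_zero) auto
  show ?thesis unfolding Cauchy_altdef2
  proof (intro allI impI)
    fix e :: real assume "e > 0"
    then obtain N where N: "\<And>m. m \<ge> N \<Longrightarrow> \<bar>K * c ^ m / (1 - c)\<bar> < e"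
      using lim unfolding LIMSEQ_iff by auto
    show "\<exists>N. \<forall>n\<ge>N. dist (f n) (f N) < e"
    proof (intro exI allI impI)
      fix n assume "n \<ge> N"
      then have "dist (f N) (f (N + (n - N))) \<le> K * c ^ N / (1 - c)" using b2 by blast
      moreover have "K * c ^ N / (1 - c) \<le> \<bar>K * c ^ N / (1 - c)\<bar>" by (rule abs_ge_self)
      ultimately show "dist (f n) (f N) < e" using N[of N] \<open>n \<ge> N\<close>
        by (simp add: dist_commute del: abs_divide abs_mult)
    qed
  qed
qed

lemma proper_cauchy:
  fixes f :: "nat \<Rightarrow> 'a::metric_space"
  assumes "proper_metric TYPE('a)" "Cauchy f"
  shows "\<exists>l. f \<longlonglongrightarrow> l"
proof -
  have "compact (closure (range f))"
    using assms unfolding proper_metric_def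
    using cauchy_imp_bounded[OF assms(2)] bounded_closure closed_closure by blast
  then have "complete (closure (range f))" by (rule compact_imp_complete)
  then show ?thesis using assms(2) closure_subset by (metis completeE range_subsetD)
qed

lemma chain_exists:
  fixes \<sigma> :: "'a::metric_space \<Rightarrow> 'a \<Rightarrow> real \<Rightarrow> 'a"
  assumes pr: "proper_metric TYPE('a)" and cb: "conical_bicombing \<sigma>" and n: "n \<ge> 1"
  shows "\<exists>p. midpoint_chain \<sigma> n x y p"
proof -
  define F where "F P i = (if i = 0 then x else if n \<le> i then y else \<sigma> (P (i - 1)) (P (i + 1)) (1/2))"
    for P :: "nat \<Rightarrow> 'a" and i
  define P where "P k = (F ^^ k) (\<lambda>i. if n \<le> i then y else x)" for k
  have PS: "P (Suc k) = F (P k)" for k by (simp add: P_def)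
  have P0: "P k 0 = x" for k using n by (cases k) (auto simp: P_def F_def)
  have Pn: "n \<le> i \<Longrightarrow> P k i = y" for k i using n by (cases k) (auto simp: P_def F_def)
  have PI: "0 < i \<Longrightarrow> i < n \<Longrightarrow> P (Suc k) i = \<sigma> (P k (i - 1)) (P k (i + 1)) (1/2)" for k i
    unfolding PS F_def by auto
  define w where "w i = real i * (real n - real i)" for i
  define c where "c = 1 - 1 / (real n)^2"
  define M where "M = (\<Sum>i\<le>n. dist (P 1 i) (P 0 i))"
  have M0: "M \<ge> 0" unfolding M_def by (intro sum_nonneg) auto
  have npos: "real n > 0" using n by simp
  have c0: "c \<ge> 0" using n unfolding c_def by (simp add: field_simps)
  have c1: "c < 1" using npos unfolding c_def by simp
  have wn: "i \<le> n \<Longrightarrow> w i \<le> (real n)^2" for i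
  proof -
    assume "i \<le> n"
    then have "real i \<le> real n" "real n - real i \<le> real n" "real n - real i \<ge> 0" by auto
    then show ?thesis unfolding w_def power2_eq_square by (intro mult_mono) auto
  qed
  have w0: "i \<le> n \<Longrightarrow> w i \<ge> 0" for i unfolding w_def by simp
  have w1: "0 < i \<Longrightarrow> i < n \<Longrightarrow> w i \<ge> 1" for i
  proof -
    assume "0 < i" "i < n"
    then have "real i \<ge> 1" "real n - real i \<ge> 1" by auto
    then show ?thesis unfolding w_def using mult_mono[of 1 "real i" 1 "real n - real i"] by simp
  qed
  have key: "\<forall>i\<le>n. dist (P (Suc k) i) (P k i) \<le> M * c ^ k * w i" for k
  proof (induction k)
    case 0
    show ?case
    proof (intro allI impI)
      fix i assume i: "i \<le> n"
      show "dist (P (Suc 0) i) (P 0 i) \<le> M * c ^ 0 * w i"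
      proof (cases "0 < i \<and> i < n")
        case True
        have "dist (P 1 i) (P 0 i) \<le> M" unfolding M_def using i
          by (intro member_le_sum) auto
        also have "\<dots> \<le> M * w i" using M0 w1[of i] True
          using mult_left_mono[of 1 "w i" M] by simp
        finally show ?thesis by simp
      next
        case False
        then have "i = 0 \<or> i = n" using i by auto
        then show ?thesis using P0 Pn w0 M0 by (auto simp: w_def)
      qed
    qed
  next
    case (Suc k)
    show ?case
    proof (intro allI impI)
      fix i assume i: "i \<le> n"
      show "dist (P (Suc (Suc k)) i) (P (Suc k) i) \<le> M * c ^ Suc k * w i"
      proof (cases "0 < i \<and> i < n")
        case True
        then have ii: "0 < i" "i < n" by auto
        have "dist (P (Suc (Suc k)) i) (P (Suc k) i) \<le>
           (1 - 1/2) * dist (P (Suc k) (i - 1)) (P k (i - 1)) + (1/2) * dist (P (Suc k) (i + 1)) (P k (i + 1))"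
          unfolding PI[OF ii, of "Suc k"] PI[OF ii, of k] by (rule cb_con[OF cb]) simp
        also have "\<dots> \<le> (1 - 1/2) * (M * c ^ k * w (i - 1)) + (1/2) * (M * c ^ k * w (i + 1))"
          using Suc.IH ii by (intro add_mono mult_left_mono) auto
        also have "\<dots> = M * c ^ k * ((w (i - 1) + w (i + 1)) / 2)"
          by (simp add: field_simps)
        also have "\<dots> = M * c ^ k * (w i - 1)"
        proof -
          have "real (i - 1) = real i - 1" using ii by simp
          then have "w (i - 1) + w (i + 1) = 2 * w i - 2" unfolding w_def by (simp add: algebra_simps)
          then show ?thesis by simp
        qed
        also have "\<dots> \<le> M * c ^ k * (c * w i)"
        proof (rule mult_left_mono)
          have "w i / (real n)^2 \<le> 1" using wn[of i] ii npos by simp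
          then show "w i - 1 \<le> c * w i" unfolding c_def by (simp add: algebra_simps)
          show "0 \<le> M * c ^ k" using M0 c0 by simp
        qed
        finally show ?thesis by (simp add: algebra_simps)
      next
        case False
        then have "i = 0 \<or> i = n" using i by auto
        then show ?thesis using P0 Pn w0 M0 by (auto simp: w_def)
      qed
    qed
  qed
  have conv: "\<exists>l. (\<lambda>k. P k i) \<longlonglongrightarrow> l" for i
  proof (cases "i \<le> n")
    case True
    have "Cauchy (\<lambda>k. P k i)"
    proof (rule geom_cauchy[OF c0 c1])
      fix k
      have "dist (P (Suc k) i) (P k i) \<le> M * c ^ k * w i" using key True by blast
      also have "\<dots> \<le> M * c ^ k * (real n)^2"
        using wn[OF True] M0 c0 by (intro mult_left_mono) auto
      finally show "dist (P (Suc k) i) (P k i) \<le> (M * (real n)^2) * c ^ k" by (simp add: algebra_simps)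
    qed
    then show ?thesis using proper_cauchy[OF pr] by blast
  next
    case False
    then show ?thesis using Pn[of i] by auto
  qed
  then obtain L where L: "\<And>i. (\<lambda>k. P k i) \<longlonglongrightarrow> L i" by metis
  have L0: "L 0 = x" using L[of 0] P0 by (simp add: LIMSEQ_const_iff)
  have Ln: "L n = y" using L[of n] Pn[of n] by (simp add: LIMSEQ_const_iff)
  have Lfix: "L i = \<sigma> (L (i - 1)) (L (i + 1)) (1/2)" if ii: "0 < i" "i < n" for i
  proof -
    have a: "(\<lambda>k. P (Suc k) i) \<longlonglongrightarrow> L i" using L[of i] by (rule LIMSEQ_Suc)
    have "(\<lambda>k. dist (P (Suc k) i) (\<sigma> (L (i - 1)) (L (i + 1)) (1/2))) \<longlonglongrightarrow> 0"
    proof (rule Lim_null_comparison)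
      show "\<forall>\<^sub>F k in sequentially. norm (dist (P (Suc k) i) (\<sigma> (L (i - 1)) (L (i + 1)) (1/2)))
         \<le> (1 - 1/2) * dist (P k (i - 1)) (L (i - 1)) + (1/2) * dist (P k (i + 1)) (L (i + 1))"
      proof (rule always_eventually, rule allI)
        fix k
        show "norm (dist (P (Suc k) i) (\<sigma> (L (i - 1)) (L (i + 1)) (1/2)))
         \<le> (1 - 1/2) * dist (P k (i - 1)) (L (i - 1)) + (1/2) * dist (P k (i + 1)) (L (i + 1))"
          unfolding PI[OF ii] real_norm_def abs_of_nonneg[OF zero_le_dist]
          by (rule cb_con[OF cb]) simp
      qed
      have "(\<lambda>k. dist (P k (i - 1)) (L (i - 1))) \<longlonglongrightarrow> 0" "(\<lambda>k. dist (P k (i + 1)) (L (i + 1))) \<longlonglongrightarrow> 0"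
        using tendsto_dist_iff[THEN iffD1, OF L] by auto
      then show "(\<lambda>k. (1 - 1/2) * dist (P k (i - 1)) (L (i - 1)) + (1/2) * dist (P k (i + 1)) (L (i + 1))) \<longlonglongrightarrow> 0"
        by (intro tendsto_add_zero tendsto_mult_right_zero)
    qed
    then have b: "(\<lambda>k. P (Suc k) i) \<longlonglongrightarrow> \<sigma> (L (i - 1)) (L (i + 1)) (1/2)"
      by (rule tendsto_dist_iff[THEN iffD2])
    show ?thesis using LIMSEQ_unique[OF a b] .
  qed
  define p where "p = map L [0..<n+1]"
  have "midpoint_chain \<sigma> n x y p"
    unfolding midpoint_chain_def p_def
  proof (intro conjI allI impI)
    show "length (map L [0..<n + 1]) = n + 1" by simp
    show "map L [0..<n + 1] ! 0 = x" using L0 by (simp del: upt_Suc)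
    show "map L [0..<n + 1] ! n = y" using Ln by (simp del: upt_Suc)
    fix i assume "1 \<le> i \<and> i \<le> n - 1"
    then have ii: "0 < i" "i < n" using n by auto
    then show "map L [0..<n + 1] ! i = \<sigma> (map L [0..<n + 1] ! (i - 1)) (map L [0..<n + 1] ! (i + 1)) (1 / 2)"
      using Lfix[OF ii] by (simp del: upt_Suc)
  qed
  then show ?thesis by blast
qed

definition segidx :: "nat \<Rightarrow> real \<Rightarrow> nat" where
  "segidx n t = min (n - 1) (nat \<lfloor>t * real n\<rfloor>)"

definition bicomb_n :: "('a \<Rightarrow> 'a \<Rightarrow> real \<Rightarrow> 'a) \<Rightarrow> nat \<Rightarrow> 'a \<Rightarrow> 'a \<Rightarrow> real \<Rightarrow> 'a" where
  "bicomb_n \<sigma> n x y t = (let p = (THE p. midpoint_chain \<sigma> n x y p); j = segidx n t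
     in \<sigma> (p ! j) (p ! (j + 1)) (t * real n - real j))"

lemma seg_exists:
  assumes n: "n \<ge> 1" and t: "t \<in> {0..1}"
  shows "\<exists>i<n. \<exists>l\<in>{0..1}. t * real n = real i + l"
proof -
  define f where "f = \<lfloor>t * real n\<rfloor>"
  have f0: "f \<ge> 0" using t unfolding f_def by simp
  have fle: "of_int f \<le> t * real n" "t * real n < of_int f + 1" unfolding f_def by linarith+
  have tn: "t * real n \<le> real n" using t n by (simp add: mult_left_le_one_le)
  show ?thesis
  proof (cases "f \<le> int n - 1")
    case True
    have i: "nat f < n" using True f0 by linarith
    have "real (nat f) = of_int f" using f0 by simp
    then show ?thesis using fle i by (intro exI[of _ "nat f"] conjI bexI[of _ "t * real n - of_int f"]) auto
  next
    case False
    then have "of_int f \<ge> real n" by linarith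
    then have "t * real n = real n" using fle tn by linarith
    moreover have "real (n - 1) + 1 = real n" using n by (simp add: of_nat_diff)
    ultimately have "t * real n = real (n - 1) + 1" by simp
    then show ?thesis using n by (intro exI[of _ "n - 1"] conjI bexI[of _ 1]) auto
  qed
qed

lemma seg_rep:
  assumes cb: "conical_bicombing \<sigma>" and n: "n \<ge> 1"
    and P: "midpoint_chain \<sigma> n x y p" and i: "i < n" and l: "l \<in> {0..1}"
    and tn: "t * real n = real i + l"
  shows "\<sigma> (p ! segidx n t) (p ! (segidx n t + 1)) (t * real n - real (segidx n t))
       = \<sigma> (p ! i) (p ! (i + 1)) l"
proof (cases "l < 1")
  case True
  have "\<lfloor>t * real n\<rfloor> = int i" unfolding tn using l True by (intro floor_unique) auto
  then have "segidx n t = i" unfolding segidx_def using i by simp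
  then show ?thesis using tn by simp
next
  case False
  then have l1: "l = 1" using l by simp
  have fl: "\<lfloor>t * real n\<rfloor> = int i + 1" unfolding tn l1 by simp
  show ?thesis
  proof (cases "i + 1 \<le> n - 1")
    case True
    then have "segidx n t = i + 1" unfolding segidx_def using fl by (simp add: nat_add_distrib)
    then show ?thesis using tn l1 cb_geo[OF cb] by simp
  next
    case False
    then have "i = n - 1" using i by simp
    then have "segidx n t = i" unfolding segidx_def using fl n by (simp add: nat_add_distrib)
    then show ?thesis using tn by simp
  qed
qed

lemma bicomb_rep:
  assumes cb: "conical_bicombing \<sigma>" and n: "n \<ge> 1"
    and U: "\<exists>!p. midpoint_chain \<sigma> n x y p" and i: "i < n" and l: "l \<in> {0..1}"
    and tn: "t * real n = real i + l"
  shows "bicomb_n \<sigma> n x y t = \<sigma> ((THE p. midpoint_chain \<sigma> n x y p) ! i) ((THE p. midpoint_chain \<sigma> n x y p) ! (i + 1)) l"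
  unfolding bicomb_n_def Let_def using seg_rep[OF cb n theI'[OF U] i l tn] .

lemma bicomb_upper:
  assumes cb: "conical_bicombing \<sigma>" and n: "n \<ge> 1"
    and U: "\<exists>!p. midpoint_chain \<sigma> n x y p"
    and s: "s \<in> {0..1}" and t: "t \<in> {0..1}" and st: "s \<le> t"
  shows "dist (bicomb_n \<sigma> n x y s) (bicomb_n \<sigma> n x y t) \<le> (t - s) * dist x y"
proof -
  define p where "p = (THE p. midpoint_chain \<sigma> n x y p)"
  have P: "midpoint_chain \<sigma> n x y p" unfolding p_def by (rule theI'[OF U])
  define \<delta> where "\<delta> = dist (p ! 0) (p ! 1)"
  have D: "dist x y = real n * \<delta>" unfolding \<delta>_def by (rule chain_total[OF cb P n])
  have d0: "\<delta> \<ge> 0" unfolding \<delta>_def by simp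
  obtain i l where il: "i < n" "l \<in> {0..1}" "s * real n = real i + l" using seg_exists[OF n s] by blast
  obtain j m where jm: "j < n" "m \<in> {0..1}" "t * real n = real j + m" using seg_exists[OF n t] by blast
  have gs: "bicomb_n \<sigma> n x y s = \<sigma> (p ! i) (p ! (i + 1)) l" unfolding p_def by (rule bicomb_rep[OF cb n U il])
  have gt: "bicomb_n \<sigma> n x y t = \<sigma> (p ! j) (p ! (j + 1)) m" unfolding p_def by (rule bicomb_rep[OF cb n U jm])
  have R: "(t - s) * dist x y = (real j + m - real i - l) * \<delta>"
    using il(3) jm(3) D by (simp add: algebra_simps)
  have "s * real n \<le> t * real n" using st by (intro mult_right_mono) auto
  then have ord: "real i + l \<le> real j + m" using il(3) jm(3) by linarith
  have seg: "dist (\<sigma> (p ! k) (p ! (k + 1)) a) (\<sigma> (p ! k) (p ! (k + 1)) b) = \<bar>a - b\<bar> * \<delta>"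
    if "k < n" "a \<in> {0..1}" "b \<in> {0..1}" for k a b
    using cb_geo(3)[OF cb that(2,3)] chain_step[OF cb P that(1)] unfolding \<delta>_def by simp
  consider "i = j" | "i < j" | "j < i" by linarith
  then show ?thesis
  proof cases
    case 1
    then show ?thesis unfolding gs gt R using seg[OF il(1) il(2) jm(2)] ord by simp
  next
    case 2
    have "dist (\<sigma> (p ! i) (p ! (i + 1)) l) (\<sigma> (p ! j) (p ! (j + 1)) m)
       \<le> dist (\<sigma> (p ! i) (p ! (i + 1)) l) (p ! (i + 1)) + dist (p ! (i + 1)) (\<sigma> (p ! j) (p ! (j + 1)) m)"
      by (rule dist_triangle)
    also have "\<dots> \<le> dist (\<sigma> (p ! i) (p ! (i + 1)) l) (p ! (i + 1)) + (dist (p ! (i + 1)) (p ! j) + dist (p ! j) (\<sigma> (p ! j) (p ! (j + 1)) m))"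
      using dist_triangle by (intro add_left_mono) auto
    also have "\<dots> \<le> (1 - l) * \<delta> + ((real j - real (i + 1)) * \<delta> + m * \<delta>)"
    proof -
      have a: "dist (\<sigma> (p ! i) (p ! (i + 1)) l) (p ! (i + 1)) = (1 - l) * \<delta>"
        using seg[OF il(1) il(2), of 1] cb_geo(2)[OF cb] il(2) by simp
      have b: "dist (p ! (i + 1)) (p ! j) \<le> (real j - real (i + 1)) * \<delta>"
        using chain_upper[OF cb P, of "i + 1" j] 2 jm(1) unfolding \<delta>_def by simp
      have c: "dist (p ! j) (\<sigma> (p ! j) (p ! (j + 1)) m) = m * \<delta>"
        using seg[OF jm(1), of 0 m] cb_geo(1)[OF cb] jm(2) by simp
      show ?thesis using a b c by simp
    qed
    also have "\<dots> = (real j + m - real i - l) * \<delta>" by (simp add: algebra_simps)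
    finally show ?thesis unfolding gs gt R .
  next
    case 3
    have "real i \<ge> real j + 1" using 3 by simp
    then have e: "l = 0" "m = 1" "i = j + 1" using ord il(2) jm(2) by auto
    have "\<sigma> (p ! i) (p ! (i + 1)) l = \<sigma> (p ! j) (p ! (j + 1)) m"
      using e cb_geo(1,2)[OF cb] by simp
    then show ?thesis unfolding gs gt using st by simp
  qed
qed

lemma bicomb_geo:
  assumes cb: "conical_bicombing \<sigma>" and n: "n \<ge> 1"
    and U: "\<exists>!p. midpoint_chain \<sigma> n x y p"
  shows "geodesic01 (bicomb_n \<sigma> n x y) x y"
proof -
  define p where "p = (THE p. midpoint_chain \<sigma> n x y p)"
  have P: "midpoint_chain \<sigma> n x y p" unfolding p_def by (rule theI'[OF U])
  let ?g = "bicomb_n \<sigma> n x y"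
  have g0: "?g 0 = x"
    using bicomb_rep[OF cb n U, of 0 0 0] n chain_0[OF P] cb_geo(1)[OF cb] unfolding p_def by simp
  have g1: "?g 1 = y"
  proof -
    have "?g 1 = \<sigma> (p ! (n - 1)) (p ! (n - 1 + 1)) 1"
      unfolding p_def using n by (intro bicomb_rep[OF cb n U]) auto
    then show ?thesis using chain_n[OF P] cb_geo(2)[OF cb] n by simp
  qed
  have le: "dist (?g s) (?g t) = (t - s) * dist x y" if st: "s \<in> {0..1}" "t \<in> {0..1}" "s \<le> t" for s t
  proof -
    have a: "dist (?g 0) (?g 1) \<le> dist (?g 0) (?g s) + dist (?g s) (?g 1)" by (rule dist_triangle)
    have b: "dist (?g s) (?g 1) \<le> dist (?g s) (?g t) + dist (?g t) (?g 1)" by (rule dist_triangle)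
    have "dist x y \<le> dist (?g 0) (?g s) + dist (?g s) (?g t) + dist (?g t) (?g 1)"
      using a b unfolding g0 g1 by linarith
    moreover have "dist (?g 0) (?g s) \<le> (s - 0) * dist x y" using st by (intro bicomb_upper[OF cb n U]) auto
    moreover have "dist (?g t) (?g 1) \<le> (1 - t) * dist x y" using st by (intro bicomb_upper[OF cb n U]) auto
    moreover have "dist (?g s) (?g t) \<le> (t - s) * dist x y" using st by (intro bicomb_upper[OF cb n U]) auto
    ultimately show ?thesis by (simp add: algebra_simps)
  qed
  show ?thesis unfolding geodesic01_def
  proof (intro conjI g0 g1 ballI)
    fix s t :: real assume "s \<in> {0..1}" "t \<in> {0..1}"
    then show "dist (?g s) (?g t) = \<bar>s - t\<bar> * dist x y"
      using le[of s t] le[of t s] by (cases "s \<le> t") (auto simp: dist_commute)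
  qed
qed

lemma bicomb_conical:
  assumes cb: "conical_bicombing \<sigma>" and n: "n \<ge> 1"
    and U: "\<And>x y. \<exists>!p. midpoint_chain \<sigma> n x y p"
  shows "conical_bicombing (bicomb_n \<sigma> n)"
  unfolding conical_bicombing_def bicombing_def
proof (intro conjI allI ballI)
  fix x y show "geodesic01 (bicomb_n \<sigma> n x y) x y" by (rule bicomb_geo[OF cb n U])
next
  fix x y x' y' and t :: real assume t: "t \<in> {0..1}"
  obtain i l where il: "i < n" "l \<in> {0..1}" "t * real n = real i + l" using seg_exists[OF n t] by blast
  define p where "p = (THE p. midpoint_chain \<sigma> n x y p)"
  have P: "midpoint_chain \<sigma> n x y p" unfolding p_def by (rule theI'[OF U])
  define q where "q = (THE p. midpoint_chain \<sigma> n x' y' p)"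
  have Q: "midpoint_chain \<sigma> n x' y' q" unfolding q_def by (rule theI'[OF U])
  have e1: "bicomb_n \<sigma> n x y t = \<sigma> (p ! i) (p ! (i + 1)) l" unfolding p_def by (rule bicomb_rep[OF cb n U il])
  have e2: "bicomb_n \<sigma> n x' y' t = \<sigma> (q ! i) (q ! (i + 1)) l" unfolding q_def by (rule bicomb_rep[OF cb n U il])
  define a where "a = dist x x'"
  define b where "b = dist y y'"
  have "dist (bicomb_n \<sigma> n x y t) (bicomb_n \<sigma> n x' y' t)
     \<le> (1 - l) * dist (p ! i) (q ! i) + l * dist (p ! (i + 1)) (q ! (i + 1))"
    unfolding e1 e2 by (rule cb_con[OF cb il(2)])
  also have "\<dots> \<le> (1 - l) * ((1 - real i / n) * a + (real i / n) * b)
      + l * ((1 - real (i + 1) / n) * a + (real (i + 1) / n) * b)"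
    unfolding a_def b_def using il chain_cmp[OF cb P Q n, of i] chain_cmp[OF cb P Q n, of "i + 1"]
    by (intro add_mono mult_left_mono) auto
  also have "\<dots> = (1 - t) * a + t * b"
  proof -
    have "t = (real i + l) / n" using il(3) n by (simp add: field_simps)
    then show ?thesis using n by (simp add: field_simps)
  qed
  finally show "dist (bicomb_n \<sigma> n x y t) (bicomb_n \<sigma> n x' y' t) \<le> (1 - t) * dist x x' + t * dist y y'"
    unfolding a_def b_def .
qed

theorem lemma5p2:
  fixes \<sigma> :: "'a::metric_space \<Rightarrow> 'a \<Rightarrow> real \<Rightarrow> 'a"
  assumes "proper_metric TYPE('a)"
    and "conical_bicombing \<sigma>"
    and "n \<ge> 1"
  shows "(\<forall>x y. \<exists>!p. midpoint_chain \<sigma> n x y p) \<and>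
         (\<exists>\<sigma>n :: 'a \<Rightarrow> 'a \<Rightarrow> real \<Rightarrow> 'a. conical_bicombing \<sigma>n \<and>
            (\<forall>x y. \<forall>l\<in>{0..1}. \<forall>i<n.
               \<sigma>n x y ((1 - l) * (real i / real n) + l * (real (i + 1) / real n)) =
               \<sigma> ((THE p. midpoint_chain \<sigma> n x y p) ! i)
                 ((THE p. midpoint_chain \<sigma> n x y p) ! (i + 1)) l))"
proof -
  have U: "\<And>x y. \<exists>!p. midpoint_chain \<sigma> n x y p"
    using chain_exists[OF assms] chain_unique[OF assms(2) _ _ assms(3)] by blast
  show ?thesis
  proof (intro conjI allI exI[of _ "bicomb_n \<sigma> n"] ballI impI)
    show "\<exists>!p. midpoint_chain \<sigma> n x y p" for x y by (rule U)
    show "conical_bicombing (bicomb_n \<sigma> n)" by (rule bicomb_conical[OF assms(2,3) U])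
    fix x y and l :: real and i assume l: "l \<in> {0..1}" and i: "i < n"
    have "((1 - l) * (real i / real n) + l * (real (i + 1) / real n)) * real n = real i + l"
      using assms(3) by (simp add: field_simps)
    then show "bicomb_n \<sigma> n x y ((1 - l) * (real i / real n) + l * (real (i + 1) / real n)) =
               \<sigma> ((THE p. midpoint_chain \<sigma> n x y p) ! i)
                 ((THE p. midpoint_chain \<sigma> n x y p) ! (i + 1)) l"
      by (rule bicomb_rep[OF assms(2,3) U i l])
  qed
qed

end
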